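(* Let $F_1,F_2$ be lean DQCNFs over the same universal variables, the same existential variables and the same dependency sets. Then the DQCNF $F_1\cup F_2$ (same variables and dependency sets, matrix the union of the two clause sets) is lean. Consequently every DQCNF $F$ has a largest (with respect to inclusion of clause sets) lean sub-DQCNF, called its lean kernel.
   Context: A DQCNF $F$ consists of a set $X$ of universal variables, a set $Y$ of existential variables, a dependency set $D_y\subseteq X$ for each $y\in Y$, and a matrix, a finite set of clauses over $X\cup Y$. An autarky for $F$ is a partial map $\varphi$ from a subset $\mathrm{dom}(\varphi)\subseteq Y$ to Boolean functions, where $\varphi(y)$ depends only on variables in $D_y$, such that every clause $C$ of $F$ either contains no variable of $\mathrm{dom}(\varphi)$ (then $\varphi$ does not touch $C$), or becomes a tautology (identically true as a function of all remaining variables) after substituting $\varphi(y)$ for each $y\in\mathrm{dom}(\varphi)$ occurring in $C$. An autarky is trivial if it touches no clause. $F$ is lean if it has no non-trivial autarky. A sub-DQCNF of $F$ is a DQCNF with the same variables and dependency sets whose matrix is a subset of the matrix of $F$. *)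

theory Defs
  imports Main
begin

text \<open>Literals are pairs (variable, polarity): (v, True) is the positive literal v,
  (v, False) the negative literal.\<close>

type_synonym 'v lit = "'v \<times> bool"
type_synonym 'v clause = "'v lit set"

record 'v dqcnf =
  univ :: "'v set"
  exist :: "'v set"
  dep :: "'v \<Rightarrow> 'v set"
  matrix :: "'v clause set"

definition vars_clause :: "'v clause \<Rightarrow> 'v set" where
  "vars_clause C = fst ` C"

definition wf_dqcnf :: "'v dqcnf \<Rightarrow> bool" where
  "wf_dqcnf F \<longleftrightarrow>
     finite (univ F) \<and> finite (exist F) \<and> univ F \<inter> exist F = {} \<and>
     (\<forall>y\<in>exist F. dep F y \<subseteq> univ F) \<and>
     finite (matrix F) \<and>
     (\<forall>C\<in>matrix F. finite C \<and> vars_clause C \<subseteq> univ F \<union> exist F)"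

definition depends_only :: "(('v \<Rightarrow> bool) \<Rightarrow> bool) \<Rightarrow> 'v set \<Rightarrow> bool" where
  "depends_only f S \<longleftrightarrow> (\<forall>\<alpha> \<beta>. (\<forall>x\<in>S. \<alpha> x = \<beta> x) \<longrightarrow> f \<alpha> = f \<beta>)"

definition subst_val :: "('v \<rightharpoonup> (('v \<Rightarrow> bool) \<Rightarrow> bool)) \<Rightarrow> ('v \<Rightarrow> bool) \<Rightarrow> 'v \<Rightarrow> bool" where
  "subst_val \<phi> \<alpha> v = (case \<phi> v of Some f \<Rightarrow> f \<alpha> | None \<Rightarrow> \<alpha> v)"

definition touches :: "('v \<rightharpoonup> (('v \<Rightarrow> bool) \<Rightarrow> bool)) \<Rightarrow> 'v clause \<Rightarrow> bool" where
  "touches \<phi> C \<longleftrightarrow> vars_clause C \<inter> dom \<phi> \<noteq> {}"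

definition is_autarky :: "'v dqcnf \<Rightarrow> ('v \<rightharpoonup> (('v \<Rightarrow> bool) \<Rightarrow> bool)) \<Rightarrow> bool" where
  "is_autarky F \<phi> \<longleftrightarrow>
     dom \<phi> \<subseteq> exist F \<and>
     (\<forall>y f. \<phi> y = Some f \<longrightarrow> depends_only f (dep F y)) \<and>
     (\<forall>C\<in>matrix F. touches \<phi> C \<longrightarrow> (\<forall>\<alpha>. \<exists>(v, b)\<in>C. subst_val \<phi> \<alpha> v = b))"

definition trivial_autarky :: "'v dqcnf \<Rightarrow> ('v \<rightharpoonup> (('v \<Rightarrow> bool) \<Rightarrow> bool)) \<Rightarrow> bool" where
  "trivial_autarky F \<phi> \<longleftrightarrow> (\<forall>C\<in>matrix F. \<not> touches \<phi> C)"

definition lean :: "'v dqcnf \<Rightarrow> bool" where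
  "lean F \<longleftrightarrow> (\<forall>\<phi>. is_autarky F \<phi> \<longrightarrow> trivial_autarky F \<phi>)"

definition same_prefix :: "'v dqcnf \<Rightarrow> 'v dqcnf \<Rightarrow> bool" where
  "same_prefix F G \<longleftrightarrow> univ F = univ G \<and> exist F = exist G \<and>
     (\<forall>y\<in>exist F. dep F y = dep G y)"

definition sub_dqcnf :: "'v dqcnf \<Rightarrow> 'v dqcnf \<Rightarrow> bool" where
  "sub_dqcnf G F \<longleftrightarrow> same_prefix G F \<and> matrix G \<subseteq> matrix F"

definition union_dqcnf :: "'v dqcnf \<Rightarrow> 'v dqcnf \<Rightarrow> 'v dqcnf" where
  "union_dqcnf F1 F2 = F1\<lparr>matrix := matrix F1 \<union> matrix F2\<rparr>"

end

theory Submission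
  imports Defs
begin

lemma aut_restrict:
  assumes "is_autarky F \<phi>" "same_prefix H F" "matrix H \<subseteq> matrix F"
  shows "is_autarky H \<phi>"
proof -
  have d: "dom \<phi> \<subseteq> exist H" using assms unfolding is_autarky_def same_prefix_def by auto
  have "\<forall>y f. \<phi> y = Some f \<longrightarrow> depends_only f (dep H y)"
  proof (intro allI impI)
    fix y f assume "\<phi> y = Some f"
    then have "y \<in> exist H" using d by auto
    then have "dep H y = dep F y" using assms(2) unfolding same_prefix_def by auto
    then show "depends_only f (dep H y)" using assms(1) \<open>\<phi> y = Some f\<close>
      unfolding is_autarky_def by auto
  qed
  moreover have "\<forall>C\<in>matrix H. touches \<phi> C \<longrightarrow> (\<forall>\<alpha>. \<exists>(v, b)\<in>C. subst_val \<phi> \<alpha> v = b)"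
    using assms(1,3) unfolding is_autarky_def by (meson subsetD)
  ultimately show "is_autarky H \<phi>" using d unfolding is_autarky_def by (intro conjI)
qed

theorem mainTheorem3:
  shows "(\<forall>F1 F2 :: 'v dqcnf. wf_dqcnf F1 \<and> wf_dqcnf F2 \<and> same_prefix F1 F2 \<and>
            lean F1 \<and> lean F2 \<longrightarrow> lean (union_dqcnf F1 F2)) \<and>
         (\<forall>F :: 'v dqcnf. wf_dqcnf F \<longrightarrow>
            (\<exists>G. sub_dqcnf G F \<and> lean G \<and>
                 (\<forall>H. sub_dqcnf H F \<and> lean H \<longrightarrow> matrix H \<subseteq> matrix G)))"
proof (rule conjI; intro allI impI)
  fix F1 F2 :: "'v dqcnf"
  assume a: "wf_dqcnf F1 \<and> wf_dqcnf F2 \<and> same_prefix F1 F2 \<and> lean F1 \<and> lean F2"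
  let ?U = "union_dqcnf F1 F2"
  have p1: "same_prefix F1 ?U" and p2: "same_prefix F2 ?U"
    using a unfolding same_prefix_def union_dqcnf_def by auto
  show "lean ?U" unfolding lean_def
  proof (intro allI impI)
    fix \<phi> assume "is_autarky ?U \<phi>"
    moreover have "matrix F1 \<subseteq> matrix ?U" "matrix F2 \<subseteq> matrix ?U"
      unfolding union_dqcnf_def by simp_all
    ultimately have "is_autarky F1 \<phi>" "is_autarky F2 \<phi>"
      using aut_restrict p1 p2 by blast+
    then have "trivial_autarky F1 \<phi>" "trivial_autarky F2 \<phi>" using a unfolding lean_def by auto
    then show "trivial_autarky ?U \<phi>" unfolding trivial_autarky_def union_dqcnf_def by auto
  qed
next
  fix F :: "'v dqcnf"
  assume "wf_dqcnf F"
  let ?G = "F\<lparr>matrix := \<Union>{matrix H | H. sub_dqcnf H F \<and> lean H}\<rparr>"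
  have sG: "sub_dqcnf ?G F" unfolding sub_dqcnf_def same_prefix_def by auto
  have "trivial_autarky ?G \<phi>" if aG: "is_autarky ?G \<phi>" for \<phi>
    unfolding trivial_autarky_def
    proof
      fix C assume "C \<in> matrix ?G"
      then obtain H where H: "sub_dqcnf H F" "lean H" "C \<in> matrix H" by auto
      have "same_prefix H ?G" using H(1) unfolding sub_dqcnf_def same_prefix_def by auto
      moreover have "matrix H \<subseteq> matrix ?G" using H by auto
      ultimately have "is_autarky H \<phi>" using aut_restrict aG by blast
      then show "\<not> touches \<phi> C" using H unfolding lean_def trivial_autarky_def by auto
    qed
  then have "lean ?G" unfolding lean_def by blast
  moreover have "\<forall>H. sub_dqcnf H F \<and> lean H \<longrightarrow> matrix H \<subseteq> matrix ?G" by (simp, blast)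
  ultimately show "\<exists>G. sub_dqcnf G F \<and> lean G \<and>
                 (\<forall>H. sub_dqcnf H F \<and> lean H \<longrightarrow> matrix H \<subseteq> matrix G)" using sG by blast
qed

end
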